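(* Let $f:\mathbb{R}^d\to\mathbb{R}$ be convex with minimizer $\boldsymbol x_0=\mathop{\mathrm{argmin}}_{\boldsymbol x}f(\boldsymbol x)$, and suppose there exist $\rho>0$ and $r>0$ such that $f$ is twice differentiable on $B(\boldsymbol x_0,r)$ with $\nabla^2f(\boldsymbol x)\succeq\rho\boldsymbol I$ for all $\boldsymbol x\in B(\boldsymbol x_0,r)$. Then $$\|\boldsymbol u\|_2\ge\rho\min\{\|\boldsymbol x-\boldsymbol x_0\|_2,r\},\qquad\forall\boldsymbol u\in\partial f(\boldsymbol x),\ \boldsymbol x\in\mathbb{R}^d.$$ If moreover $g:\mathbb{R}^d\to\mathbb{R}$ is convex and $\lambda$-Lipschitz (w.r.t. $\|\cdot\|_2$) for some $\lambda<\rho r$, then $f+g$ has a unique minimizer and it belongs to $B(\boldsymbol x_0,\lambda/\rho)$.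
   Context: $B(\boldsymbol x,r)$ is the closed Euclidean ball; $\partial f$ is the subdifferential. *)

theory Defs
  imports "HOL-Analysis.Analysis"
begin

definition subdifferential :: "('a::real_inner \<Rightarrow> real) \<Rightarrow> 'a \<Rightarrow> 'a set" where
  "subdifferential f x = {u. \<forall>y. f x + inner u (y - x) \<le> f y}"

definition is_minimizer :: "('a \<Rightarrow> real) \<Rightarrow> 'a \<Rightarrow> bool" where
  "is_minimizer f z \<longleftrightarrow> (\<forall>y. f z \<le> f y)"

end

theory Submission
  imports Defs
begin

lemma L1:
  fixes dp dd :: "real \<Rightarrow> real"
  assumes D: "\<And>t. t \<in> {a..b} \<Longrightarrow> (dp has_derivative (\<lambda>h. h * dd t)) (at t within {a..b})"
    and C: "\<And>t. t \<in> {a..b} \<Longrightarrow> dd t \<ge> c"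
    and pq: "p \<in> {a..b}" "q \<in> {a..b}" "p \<le> q"
  shows "dp q - dp p \<ge> c * (q - p)"
proof -
  have "{p..q} \<subseteq> {a..b}" using pq by auto
  then have "\<And>t. p \<le> t \<Longrightarrow> t \<le> q \<Longrightarrow> (dp has_derivative (\<lambda>h. h * dd t)) (at t within {p..q})"
    using D by (meson atLeastAtMost_iff has_derivative_subset subsetD)
  from mvt_very_simple[OF pq(3) this] obtain x where x: "x \<in> {p..q}" "dp q - dp p = (q - p) * dd x"
    by blast
  have "dd x \<ge> c" using C x(1) pq by auto
  then show ?thesis using x pq(3) by (simp add: mult.commute mult_right_mono)
qed

lemma L2:
  fixes ph dp dd :: "real \<Rightarrow> real"
  assumes D1: "\<And>t. t \<in> {a..b} \<Longrightarrow> (ph has_derivative (\<lambda>h. h * dp t)) (at t within {a..b})"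
    and D: "\<And>t. t \<in> {a..b} \<Longrightarrow> (dp has_derivative (\<lambda>h. h * dd t)) (at t within {a..b})"
    and C: "\<And>t. t \<in> {a..b} \<Longrightarrow> dd t \<ge> c"
    and pq: "p \<in> {a..b}" "q \<in> {a..b}"
  shows "ph q \<ge> ph p + dp p * (q - p) + c / 2 * (q - p)^2"
proof -
  define ch where "ch t = ph t - c / 2 * (t - p)^2" for t
  have dch: "(ch has_derivative (\<lambda>h. h * (dp t - c * (t - p)))) (at t within {a..b})"
    if "t \<in> {a..b}" for t
  proof -
    have "((\<lambda>t. c / 2 * (t - p)^2) has_derivative (\<lambda>h. h * (c * (t - p)))) (at t within {a..b})"
      unfolding power2_eq_square
      by (auto intro!: derivative_eq_intros simp: algebra_simps)
    from has_derivative_diff[OF D1[OF that] this] show ?thesis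
      unfolding ch_def by (simp add: algebra_simps)
  qed
  show ?thesis
  proof (cases "p \<le> q")
    case True
    have "{p..q} \<subseteq> {a..b}" using pq by auto
    then have "\<And>t. p \<le> t \<Longrightarrow> t \<le> q \<Longrightarrow> (ch has_derivative (\<lambda>h. h * (dp t - c * (t - p)))) (at t within {p..q})"
      using dch by (meson atLeastAtMost_iff has_derivative_subset subsetD)
    from mvt_very_simple[OF True this] obtain x where x: "x \<in> {p..q}" "ch q - ch p = (q - p) * (dp x - c * (x - p))"
      by blast
    have "dp x - dp p \<ge> c * (x - p)" using L1[OF D C, of p x] x pq by auto
    then have "dp x - c * (x - p) \<ge> dp p" by simp
    then have "(q - p) * (dp x - c * (x - p)) \<ge> (q - p) * dp p" using True by (intro mult_left_mono) auto
    then have "ch q - ch p \<ge> (q - p) * dp p" using x by simp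
    then show ?thesis unfolding ch_def by (simp add: algebra_simps)
  next
    case False
    then have F: "q \<le> p" by simp
    have "{q..p} \<subseteq> {a..b}" using pq by auto
    then have "\<And>t. q \<le> t \<Longrightarrow> t \<le> p \<Longrightarrow> (ch has_derivative (\<lambda>h. h * (dp t - c * (t - p)))) (at t within {q..p})"
      using dch by (meson atLeastAtMost_iff has_derivative_subset subsetD)
    from mvt_very_simple[OF F this] obtain x where x: "x \<in> {q..p}" "ch p - ch q = (p - q) * (dp x - c * (x - p))"
      by blast
    have "dp p - dp x \<ge> c * (p - x)" using L1[OF D C, of x p] x pq by auto
    then have "dp x - c * (x - p) \<le> dp p" by (simp add: algebra_simps)
    then have "(p - q) * (dp x - c * (x - p)) \<le> (p - q) * dp p" using F by (intro mult_left_mono) auto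
    then have "ch p - ch q \<le> (p - q) * dp p" using x by simp
    then show ?thesis unfolding ch_def by (simp add: algebra_simps)
  qed
qed

lemma L3:
  fixes f :: "'a::euclidean_space \<Rightarrow> real"
    and grad :: "'a \<Rightarrow> 'a"
    and H :: "'a \<Rightarrow> 'a \<Rightarrow> 'a"
  assumes grad: "\<And>x. x \<in> B \<Longrightarrow> (f has_derivative (\<lambda>h. inner (grad x) h)) (at x within B)"
    and hess: "\<And>x. x \<in> B \<Longrightarrow> (grad has_derivative H x) (at x within B)"
    and hess_lb: "\<And>x h. x \<in> B \<Longrightarrow> \<rho> * inner h h \<le> inner h (H x h)"
    and line: "\<And>t. t \<in> {\<alpha>..\<beta>} \<Longrightarrow> a + t *\<^sub>R d \<in> B"
  shows "\<And>t. t \<in> {\<alpha>..\<beta>} \<Longrightarrow> ((\<lambda>t. f (a + t *\<^sub>R d)) has_derivative (\<lambda>h. h * inner (grad (a + t *\<^sub>R d)) d)) (at t within {\<alpha>..\<beta>})"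
    and "\<And>t. t \<in> {\<alpha>..\<beta>} \<Longrightarrow> ((\<lambda>t. inner (grad (a + t *\<^sub>R d)) d) has_derivative (\<lambda>h. h * inner d (H (a + t *\<^sub>R d) d))) (at t within {\<alpha>..\<beta>})"
    and "\<And>t. t \<in> {\<alpha>..\<beta>} \<Longrightarrow> \<rho> * inner d d \<le> inner d (H (a + t *\<^sub>R d) d)"
proof -
  fix t assume t: "t \<in> {\<alpha>..\<beta>}"
  have img: "(\<lambda>t. a + t *\<^sub>R d) ` {\<alpha>..\<beta>} \<subseteq> B" using line by auto
  have dl: "((\<lambda>t. a + t *\<^sub>R d) has_derivative (\<lambda>h. h *\<^sub>R d)) (at t within {\<alpha>..\<beta>})"
    by (auto intro!: derivative_eq_intros)
  have yB: "a + t *\<^sub>R d \<in> B" using line t .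
  have "(f has_derivative (\<lambda>h. inner (grad (a + t *\<^sub>R d)) h)) (at (a + t *\<^sub>R d) within ((\<lambda>t. a + t *\<^sub>R d) ` {\<alpha>..\<beta>}))"
    using has_derivative_subset[OF grad[OF yB] img] .
  from diff_chain_within[OF dl this]
  show "((\<lambda>t. f (a + t *\<^sub>R d)) has_derivative (\<lambda>h. h * inner (grad (a + t *\<^sub>R d)) d)) (at t within {\<alpha>..\<beta>})"
    by (simp add: o_def)
  have "(grad has_derivative H (a + t *\<^sub>R d)) (at (a + t *\<^sub>R d) within ((\<lambda>t. a + t *\<^sub>R d) ` {\<alpha>..\<beta>}))"
    using has_derivative_subset[OF hess[OF yB] img] .
  from diff_chain_within[OF dl this]
  have "((\<lambda>t. grad (a + t *\<^sub>R d)) has_derivative (\<lambda>h. H (a + t *\<^sub>R d) (h *\<^sub>R d))) (at t within {\<alpha>..\<beta>})"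
    by (simp add: o_def)
  from has_derivative_inner_left[OF this, of d]
  have "((\<lambda>t. inner (grad (a + t *\<^sub>R d)) d) has_derivative (\<lambda>h. inner (H (a + t *\<^sub>R d) (h *\<^sub>R d)) d)) (at t within {\<alpha>..\<beta>})" .
  moreover have "bounded_linear (H (a + t *\<^sub>R d))"
    using has_derivative_bounded_linear[OF hess[OF yB]] .
  then have "\<And>h. H (a + t *\<^sub>R d) (h *\<^sub>R d) = h *\<^sub>R H (a + t *\<^sub>R d) d"
    by (simp add: linear_simps)
  ultimately show "((\<lambda>t. inner (grad (a + t *\<^sub>R d)) d) has_derivative (\<lambda>h. h * inner d (H (a + t *\<^sub>R d) d))) (at t within {\<alpha>..\<beta>})"
    by (simp add: inner_commute)
  show "\<rho> * inner d d \<le> inner d (H (a + t *\<^sub>R d) d)" using hess_lb[OF yB] .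
qed


lemma mid_aux:
  fixes a m :: real
  assumes "a < m"
  shows "a < (a + m) / 2" "(a + m) / 2 < m"
  using assms by (auto simp: field_simps)

theorem lemmaE2:
  fixes f :: "'a::euclidean_space \<Rightarrow> real"
    and grad :: "'a \<Rightarrow> 'a"
    and H :: "'a \<Rightarrow> 'a \<Rightarrow> 'a"
    and x0 :: 'a
    and \<rho> r :: real
  assumes f_convex: "convex_on UNIV f"
    and x0_min: "is_minimizer f x0"
    and \<rho>_pos: "\<rho> > 0" and r_pos: "r > 0"
    and grad: "\<And>x. x \<in> cball x0 r \<Longrightarrow>
                  (f has_derivative (\<lambda>h. inner (grad x) h)) (at x within cball x0 r)"
    and hess: "\<And>x. x \<in> cball x0 r \<Longrightarrow> (grad has_derivative H x) (at x within cball x0 r)"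
    and hess_lb: "\<And>x h. x \<in> cball x0 r \<Longrightarrow> \<rho> * inner h h \<le> inner h (H x h)"
  shows "(\<forall>x u. u \<in> subdifferential f x \<longrightarrow> norm u \<ge> \<rho> * min (norm (x - x0)) r)
     \<and> (\<forall>(g :: 'a \<Rightarrow> real) L. convex_on UNIV g \<and> L-lipschitz_on UNIV g \<and> L < \<rho> * r \<longrightarrow>
          (\<exists>!z. is_minimizer (\<lambda>x. f x + g x) z) \<and>
          (\<forall>z. is_minimizer (\<lambda>x. f x + g x) z \<longrightarrow> z \<in> cball x0 (L / \<rho>)))"
proof -
  note L3' = L3[of "cball x0 r" f grad H \<rho>, OF grad hess hess_lb]
  have "x0 \<in> interior (cball x0 r)" using r_pos by simp
  then have "(f has_derivative (\<lambda>h. inner (grad x0) h)) (at x0)"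
    using grad[of x0] r_pos at_within_interior by fastforce
  moreover have "eventually (\<lambda>y. f x0 \<le> f y) (at x0)"
    using x0_min unfolding is_minimizer_def by simp
  ultimately have "(\<lambda>h. inner (grad x0) h) = (\<lambda>h. 0)" by (rule has_derivative_local_min)
  then have g0: "grad x0 = 0" by (metis inner_eq_zero_iff)
  have K: "f x - f (x0 + s *\<^sub>R ((x - x0) /\<^sub>R norm (x - x0))) \<ge> \<rho> * s * (norm (x - x0) - s)"
    if x: "x \<noteq> x0" and s: "0 \<le> s" "s < min (norm (x - x0)) r" for x s
  proof -
    define D where "D = norm (x - x0)"
    define e where "e = (x - x0) /\<^sub>R D"
    define s' where "s' = min D r"
    have Dpos: "D > 0" using x by (simp add: D_def)
    have ne: "norm e = 1" using Dpos by (simp add: e_def D_def)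
    have xe: "x = x0 + D *\<^sub>R e" using Dpos by (simp add: e_def)
    have line: "x0 + t *\<^sub>R e \<in> cball x0 r" if "t \<in> {0..s'}" for t
      using that ne by (auto simp: s'_def dist_norm)
    note LL = L3'[OF _ _ _ line]
    have ss: "s \<in> {0..s'}" "s' \<in> {0..s'}" "0 \<in> {0..s'}" "s < s'" using s by (auto simp: s'_def D_def)
    have ee: "inner e e = 1" using ne by (simp add: dot_square_norm)
    have d1: "inner (grad (x0 + s *\<^sub>R e)) e - inner (grad (x0 + 0 *\<^sub>R e)) e \<ge> \<rho> * inner e e * (s - 0)"
      by (rule L1[OF LL(2) LL(3)]) (use ss in auto)
    then have d1': "inner (grad (x0 + s *\<^sub>R e)) e \<ge> \<rho> * s" using g0 ee by simp
    have "f (x0 + s' *\<^sub>R e) \<ge> f (x0 + s *\<^sub>R e) + inner (grad (x0 + s *\<^sub>R e)) e * (s' - s) + \<rho> * inner e e / 2 * (s' - s)^2"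
      by (rule L2[OF LL(1) LL(2) LL(3)]) (use ss in auto)
    moreover have "\<rho> * inner e e / 2 * (s' - s)^2 \<ge> 0" using \<rho>_pos ee by simp
    moreover have "inner (grad (x0 + s *\<^sub>R e)) e * (s' - s) \<ge> \<rho> * s * (s' - s)"
      using d1' ss by (simp add: mult_right_mono)
    ultimately have A: "f (x0 + s' *\<^sub>R e) - f (x0 + s *\<^sub>R e) \<ge> \<rho> * s * (s' - s)" by linarith
    define \<mu> where "\<mu> = (s' - s) / (D - s)"
    have Ds: "D - s > 0" "s' \<le> D" using ss by (auto simp: s'_def)
    have mu: "0 < \<mu>" "\<mu> \<le> 1" using Ds ss by (auto simp: \<mu>_def)
    have comb: "x0 + s' *\<^sub>R e = (1 - \<mu>) *\<^sub>R (x0 + s *\<^sub>R e) + \<mu> *\<^sub>R x"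
    proof -
      have m: "\<mu> * (D - s) = s' - s" using Ds by (simp add: \<mu>_def)
      have "s' = (1 - \<mu>) * s + \<mu> * D" using m by (simp add: algebra_simps)
      moreover have "(1 - \<mu>) *\<^sub>R (x0 + s *\<^sub>R e) + \<mu> *\<^sub>R (x0 + D *\<^sub>R e) = x0 + ((1 - \<mu>) * s + \<mu> * D) *\<^sub>R e"
        by (simp add: algebra_simps)
      ultimately show ?thesis using xe by simp
    qed
    have "f (x0 + s' *\<^sub>R e) \<le> (1 - \<mu>) * f (x0 + s *\<^sub>R e) + \<mu> * f x"
      unfolding comb by (rule convex_onD[OF f_convex]) (use mu in auto)
    with A have "\<rho> * s * (s' - s) \<le> \<mu> * (f x - f (x0 + s *\<^sub>R e))" by (simp add: algebra_simps)
    then have "\<rho> * s * (s' - s) / \<mu> \<le> f x - f (x0 + s *\<^sub>R e)" using mu by (simp add: field_simps)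
    moreover have "\<rho> * s * (s' - s) / \<mu> = \<rho> * s * (D - s)" using Ds ss by (simp add: \<mu>_def field_simps)
    ultimately show ?thesis by (simp add: D_def e_def)
  qed

  have P1: "\<forall>x u. u \<in> subdifferential f x \<longrightarrow> norm u \<ge> \<rho> * min (norm (x - x0)) r"
  proof (intro allI impI)
    fix x u assume u: "u \<in> subdifferential f x"
    show "norm u \<ge> \<rho> * min (norm (x - x0)) r"
    proof (cases "x = x0")
      case True then show ?thesis using r_pos by (simp add: min_def)
    next
      case False
      define D where "D = norm (x - x0)"
      define e where "e = (x - x0) /\<^sub>R D"
      have Dpos: "D > 0" using False by (simp add: D_def)
      have ne: "norm e = 1" using Dpos by (simp add: e_def D_def)
      have xe: "x = x0 + D *\<^sub>R e" using Dpos by (simp add: e_def)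
      have bound: "\<rho> * s \<le> norm u" if s: "0 \<le> s" "s < min D r" for s
      proof -
        have k: "f x - f (x0 + s *\<^sub>R e) \<ge> \<rho> * s * (D - s)"
          using K[OF False s(1)] s(2) by (simp add: D_def e_def)
        have sub: "f x + inner u ((x0 + s *\<^sub>R e) - x) \<le> f (x0 + s *\<^sub>R e)"
          using u by (simp add: subdifferential_def)
        have yx: "(x0 + s *\<^sub>R e) - x = (s - D) *\<^sub>R e" using xe by (simp add: algebra_simps)
        have i2: "inner u ((x0 + s *\<^sub>R e) - x) = - ((D - s) * inner u e)"
          unfolding yx inner_scaleR_right by (simp add: algebra_simps)
        have "inner u e \<le> norm u" using norm_cauchy_schwarz[of u e] ne by simp
        moreover have "D - s > 0" using s by simp
        ultimately have "(D - s) * inner u e \<le> (D - s) * norm u" by (intro mult_left_mono) auto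
        then have "f x - f (x0 + s *\<^sub>R e) \<le> (D - s) * norm u"
          using sub i2 by linarith
        with k have "(D - s) * (\<rho> * s) \<le> (D - s) * norm u" by (simp add: algebra_simps)
        with \<open>D - s > 0\<close> show ?thesis by simp
      qed
      show ?thesis
      proof (rule ccontr)
        assume "\<not> ?thesis"
        then have lt: "norm u < \<rho> * min D r" by (simp add: D_def)
        define s where "s = (norm u / \<rho> + min D r) / 2"
        have "norm u / \<rho> < min D r" using lt \<rho>_pos by (simp only: pos_divide_less_eq mult.commute)
        moreover have "min D r > 0" using Dpos r_pos by simp
        moreover have "norm u / \<rho> \<ge> 0" using \<rho>_pos by simp
        moreover have aux: "\<And>a m::real. a < m \<Longrightarrow> 0 \<le> a \<Longrightarrow> 0 \<le> (a + m) / 2 \<and> (a + m) / 2 < m"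
          by (auto simp: field_simps)
        ultimately have "0 \<le> s \<and> s < min D r" unfolding s_def by blast
        then have "0 \<le> s" "s < min D r" by auto
        from bound[OF this] have "\<rho> * s \<le> norm u" .
        moreover have "\<rho> * s > norm u" using lt \<rho>_pos unfolding s_def by (simp add: field_simps)
        ultimately show False by simp
      qed
    qed
  qed
  have P2: "convex_on UNIV g \<and> L-lipschitz_on UNIV g \<and> L < \<rho> * r \<longrightarrow>
          (\<exists>!z. is_minimizer (\<lambda>x. f x + g x) z) \<and>
          (\<forall>z. is_minimizer (\<lambda>x. f x + g x) z \<longrightarrow> z \<in> cball x0 (L / \<rho>))" for g :: "'a \<Rightarrow> real" and L
  proof (intro impI)
    assume asm: "convex_on UNIV g \<and> L-lipschitz_on UNIV g \<and> L < \<rho> * r"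
    then have g_convex: "convex_on UNIV g" and lip: "L-lipschitz_on UNIV g" and Lr: "L < \<rho> * r" by auto
    have L0: "L \<ge> 0" using lip by (simp add: lipschitz_on_def)
    have gl: "g y - g z \<le> L * norm (y - z)" for y z
    proof -
      have "dist (g y) (g z) \<le> L * dist y z" using lipschitz_onD[OF lip] by simp
      then have "\<bar>g y - g z\<bar> \<le> L * norm (y - z)" by (simp add: dist_real_def dist_norm)
      then show ?thesis by linarith
    qed
    have Lr': "L / \<rho> < r" using Lr \<rho>_pos by (simp add: field_simps)
    have Lp: "L / \<rho> \<ge> 0" using L0 \<rho>_pos by simp
    define F where "F = (\<lambda>x. f x + g x)"
    have C: "\<exists>y. norm (y - x0) < r \<and> F y < F z" if z: "norm (z - x0) > L / \<rho>" for z
    proof -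
      define D where "D = norm (z - x0)"
      define e where "e = (z - x0) /\<^sub>R D"
      have zne: "z \<noteq> x0" using z Lp by auto
      have Dpos: "D > 0" using zne by (simp add: D_def)
      have ne: "norm e = 1" using Dpos by (simp add: e_def D_def)
      have ze: "z = x0 + D *\<^sub>R e" using Dpos by (simp add: e_def)
      define m where "m = min D r"
      have mL: "m > L / \<rho>" using z Lr' by (simp add: m_def D_def)
      define s where "s = (L / \<rho> + m) / 2"
      have s3: "s > L / \<rho>" and s2: "s < m" using mid_aux[OF mL] by (auto simp: s_def)
      have s: "0 \<le> s" "s < min (norm (z - x0)) r" "s > L / \<rho>"
        using s3 s2 Lp by (auto simp: m_def D_def)
      have k: "f z - f (x0 + s *\<^sub>R e) \<ge> \<rho> * s * (D - s)"
        using K[OF zne s(1) s(2)] by (simp add: D_def e_def)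
      have "(x0 + s *\<^sub>R e) - z = (s - D) *\<^sub>R e" using ze by (simp add: algebra_simps)
      then have "norm ((x0 + s *\<^sub>R e) - z) = D - s" using ne s(2) by (simp add: D_def)
      then have gg: "g (x0 + s *\<^sub>R e) - g z \<le> L * (D - s)" using gl by metis
      have Ds: "D - s > 0" using s(2) by (simp add: D_def)
      have "\<rho> * s > L" using s(3) \<rho>_pos by (simp add: field_simps)
      then have "L * (D - s) < \<rho> * s * (D - s)" using Ds by simp
      then have "F (x0 + s *\<^sub>R e) < F z" using k gg by (simp add: F_def)
      moreover have "norm ((x0 + s *\<^sub>R e) - x0) < r" using ne s by simp
      ultimately show ?thesis by blast
    qed
    have inball: "z \<in> cball x0 (L / \<rho>)" if "is_minimizer (\<lambda>x. f x + g x) z" for z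
    proof (rule ccontr)
      assume "z \<notin> cball x0 (L / \<rho>)"
      then have "norm (z - x0) > L / \<rho>" by (simp add: dist_norm norm_minus_commute)
      from C[OF this] obtain y where "F y < F z" by blast
      with that show False by (simp add: is_minimizer_def F_def) (meson not_le)
    qed
    have contF: "continuous_on (cball x0 r) F"
    proof -
      have "continuous_on UNIV f" using convex_on_continuous[OF open_UNIV f_convex] .
      moreover have "continuous_on UNIV g" using lipschitz_on_continuous_on[OF lip] .
      ultimately have "continuous_on UNIV F" unfolding F_def by (intro continuous_on_add)
      then show ?thesis by (rule continuous_on_subset) simp
    qed
    obtain z where zc: "z \<in> cball x0 r" and zmin: "\<forall>y\<in>cball x0 r. F z \<le> F y"
      using continuous_attains_inf[OF compact_cball _ contF] r_pos by fastforce
    have zglob: "is_minimizer (\<lambda>x. f x + g x) z"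
      unfolding is_minimizer_def
    proof
      fix y
      show "f z + g z \<le> f y + g y"
      proof (cases "y \<in> cball x0 r")
        case True then show ?thesis using zmin by (simp add: F_def)
      next
        case False
        then have "norm (y - x0) > L / \<rho>" using Lr' by (simp add: dist_norm norm_minus_commute)
        from C[OF this] obtain y' where "norm (y' - x0) < r" "F y' < F y" by blast
        moreover then have "y' \<in> cball x0 r" by (simp add: dist_norm norm_minus_commute)
        ultimately show ?thesis using zmin by (fastforce simp: F_def)
      qed
    qed
    have uniq: "z1 = z2" if z1: "is_minimizer (\<lambda>x. f x + g x) z1" and z2: "is_minimizer (\<lambda>x. f x + g x) z2" for z1 z2
    proof (rule ccontr)
      assume ne: "z1 \<noteq> z2"
      have c1: "z1 \<in> cball x0 r" "z2 \<in> cball x0 r"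
        using inball[OF z1] inball[OF z2] Lr' by auto
      define d where "d = z2 - z1"
      have line: "z1 + t *\<^sub>R d \<in> cball x0 r" if "t \<in> {0..1}" for t
      proof -
        have "(1 - t) *\<^sub>R z1 + t *\<^sub>R z2 \<in> cball x0 r"
          using convexD_alt[OF convex_cball c1] that by auto
        moreover have "(1 - t) *\<^sub>R z1 + t *\<^sub>R z2 = z1 + t *\<^sub>R d" by (simp add: d_def algebra_simps)
        ultimately show ?thesis by simp
      qed
      note LL = L3'[OF _ _ _ line]
      have h: "1/2 \<in> {0..1::real}" "0 \<in> {0..1::real}" "1 \<in> {0..1::real}" by auto
      have e0': "f (z1 + 0 *\<^sub>R d) \<ge> f (z1 + (1/2) *\<^sub>R d) + inner (grad (z1 + (1/2) *\<^sub>R d)) d * (0 - 1/2) + \<rho> * inner d d / 2 * (0 - 1/2)^2"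
        by (rule L2[OF LL(1) LL(2) LL(3)]) (use h in auto)
      then have e0: "f z1 \<ge> f (z1 + (1/2) *\<^sub>R d) + inner (grad (z1 + (1/2) *\<^sub>R d)) d * (0 - 1/2) + \<rho> * inner d d / 2 * (0 - 1/2)^2"
        by simp
      have e1': "f (z1 + 1 *\<^sub>R d) \<ge> f (z1 + (1/2) *\<^sub>R d) + inner (grad (z1 + (1/2) *\<^sub>R d)) d * (1 - 1/2) + \<rho> * inner d d / 2 * (1 - 1/2)^2"
        by (rule L2[OF LL(1) LL(2) LL(3)]) (use h in auto)
      then have e1: "f z2 \<ge> f (z1 + (1/2) *\<^sub>R d) + inner (grad (z1 + (1/2) *\<^sub>R d)) d * (1 - 1/2) + \<rho> * inner d d / 2 * (1 - 1/2)^2"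
        by (simp add: d_def)
      have cpos: "\<rho> * inner d d > 0" using ne \<rho>_pos by (simp add: d_def)
      have hh: "(1/2::real) *\<^sub>R z1 + (1/2) *\<^sub>R z1 = z1" by (simp flip: scaleR_add_left)
      have mid: "(1 - 1/2) *\<^sub>R z1 + (1/2::real) *\<^sub>R z2 = z1 + (1/2) *\<^sub>R d"
        using hh by (simp add: d_def algebra_simps)
      have gm: "g (z1 + (1/2) *\<^sub>R d) \<le> (1 - 1/2) * g z1 + (1/2) * g z2"
        using convex_onD[OF g_convex, of "1/2" z1 z2] mid by simp
      have eq: "f z1 + g z1 = f z2 + g z2" using z1 z2 unfolding is_minimizer_def by (meson order_antisym)
      have "f (z1 + (1/2) *\<^sub>R d) + g (z1 + (1/2) *\<^sub>R d) < f z1 + g z1"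
        using e0 e1 gm eq cpos by (simp add: power2_eq_square algebra_simps)
      then show False using z1 unfolding is_minimizer_def by (meson not_le)
    qed
    show "(\<exists>!z. is_minimizer (\<lambda>x. f x + g x) z) \<and>
          (\<forall>z. is_minimizer (\<lambda>x. f x + g x) z \<longrightarrow> z \<in> cball x0 (L / \<rho>))"
      using zglob uniq inball by blast
  qed
  show ?thesis using P1 P2 by blast
qed

end
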